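(* For $\lambda\in[-1,1]$ let $C_\lambda(u_1,u_2,u_3)=u_1u_2u_3[1+\lambda(1-u_1)(1-u_2)(1-u_3)]$ on $[0,1]^3$. If $\lambda\in[-1,0]$, then $C_\lambda$ is $I(1,1,1)$, $I(1,-1,-1)$, $I(-1,1,-1)$ and $I(-1,-1,1)$. If $\lambda\in[0,1]$, then $C_\lambda$ is $I(-1,1,1)$, $I(1,-1,1)$, $I(1,1,-1)$ and $I(-1,-1,-1)$.
   Context: For $\alpha\in\{-1,1\}^n$ and a random vector $\mathbf X$, write $\alpha\mathbf X=(\alpha_1X_1,\dots,\alpha_nX_n)$; inequalities between vectors are componentwise. $\mathbf X$ is $I(\alpha)$ if for every $\mathbf x\in\mathbb R^n$, $\mathbb P[\alpha\mathbf X>\mathbf x\mid \alpha\mathbf X>\mathbf x']\le \mathbb P[\alpha\mathbf X>\mathbf x\mid \alpha\mathbf X>\mathbf x'']$ whenever $\mathbf x'\le\mathbf x''$ and $\mathbb P[\alpha\mathbf X>\mathbf x'']>0$. A copula is $I(\alpha)$ if a random vector with that distribution function is. *)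

theory Defs
  imports "HOL-Probability.Probability"
begin

definition sgt_event :: "'a measure \<Rightarrow> ('a \<Rightarrow> real^'n) \<Rightarrow> real^'n \<Rightarrow> real^'n \<Rightarrow> 'a set" where
  "sgt_event M X \<alpha> x = {\<omega> \<in> space M. \<forall>i. \<alpha> $ i * X \<omega> $ i > x $ i}"

definition cond_prob :: "'a measure \<Rightarrow> 'a set \<Rightarrow> 'a set \<Rightarrow> real" where
  "cond_prob M A B = measure M (A \<inter> B) / measure M B"

definition I_dep :: "'a measure \<Rightarrow> ('a \<Rightarrow> real^'n) \<Rightarrow> real^'n \<Rightarrow> bool" where
  "I_dep M X \<alpha> \<longleftrightarrow>
     (\<forall>x x' x''. (\<forall>i. x' $ i \<le> x'' $ i) \<and> measure M (sgt_event M X \<alpha> x'') > 0 \<longrightarrow>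
        cond_prob M (sgt_event M X \<alpha> x) (sgt_event M X \<alpha> x')
          \<le> cond_prob M (sgt_event M X \<alpha> x) (sgt_event M X \<alpha> x''))"

text \<open>X has distribution function C, where the copula C on [0,1]^n is extended to
  R^n in the standard way, C(x) = C(clamp x) with clamp to [0,1] componentwise.\<close>
definition has_copula_df :: "'a measure \<Rightarrow> ('a \<Rightarrow> real^'n) \<Rightarrow> (real^'n \<Rightarrow> real) \<Rightarrow> bool" where
  "has_copula_df M X C \<longleftrightarrow>
     (\<forall>x. measure M {\<omega> \<in> space M. \<forall>i. X \<omega> $ i \<le> x $ i}
            = C (\<chi> i. max 0 (min 1 (x $ i))))"

definition C_lam :: "real \<Rightarrow> real^3 \<Rightarrow> real" where
  "C_lam l u = u$1 * u$2 * u$3 * (1 + l * (1 - u$1) * (1 - u$2) * (1 - u$3))"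

end

theory Submission imports Defs begin

definition cl :: "real \<Rightarrow> real" where "cl t = max 0 (min 1 t)"
definition ph :: "real \<Rightarrow> real" where "ph u = u * (1 - u)"
definition cnd :: "real option \<Rightarrow> real \<Rightarrow> real \<Rightarrow> bool" where
  "cnd lo hi t = ((case lo of None \<Rightarrow> True | Some a \<Rightarrow> a < t) \<and> t \<le> hi)"

definition Fk :: "real \<Rightarrow> real \<Rightarrow> real \<Rightarrow> real \<Rightarrow> real" where
  "Fk k w1 w2 w3 = (1-w1)*(1-w2)*(1-w3)*(1+k*w1*w2*w3)"

lemma sm2: fixes x1 y1 x2 y2 :: real assumes "0 \<le> x1" "0 \<le> y1" "0 \<le> x2" "0 \<le> y2"
  shows "x1*x2 + y1*y2 \<le> max x1 y1 * max x2 y2 + min x1 y1 * min x2 y2"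
proof (cases "x1 \<le> y1"; cases "x2 \<le> y2")
  assume "x1 \<le> y1" "\<not> x2 \<le> y2"
  then have "0 \<le> (y1 - x1) * (x2 - y2)" by simp
  then show ?thesis using \<open>x1 \<le> y1\<close> \<open>\<not> x2 \<le> y2\<close> by (simp add: max_def min_def algebra_simps)
next
  assume "\<not> x1 \<le> y1" "x2 \<le> y2"
  then have "0 \<le> (x1 - y1) * (y2 - x2)" by simp
  then show ?thesis using \<open>\<not> x1 \<le> y1\<close> \<open>x2 \<le> y2\<close> by (simp add: max_def min_def algebra_simps)
qed (auto simp: max_def min_def)

lemma sm3: fixes a1 a2 a3 b1 b2 b3 :: real
  assumes "0 \<le> a1" "0 \<le> a2" "0 \<le> a3" "0 \<le> b1" "0 \<le> b2" "0 \<le> b3"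
  shows "a1*a2*a3 + b1*b2*b3 \<le> max a1 b1 * max a2 b2 * max a3 b3 + min a1 b1 * min a2 b2 * min a3 b3"
proof -
  define P where "P = max (a2*a3) (b2*b3)"
  define p where "p = min (a2*a3) (b2*b3)"
  define M where "M = max a2 b2 * max a3 b3"
  define m where "m = min a2 b2 * min a3 b3"
  have 1: "a1*(a2*a3) + b1*(b2*b3) \<le> max a1 b1 * P + min a1 b1 * p"
    unfolding P_def p_def by (rule sm2) (use assms in auto)
  have 2: "a2*a3 + b2*b3 \<le> M + m" unfolding M_def m_def by (rule sm2) (use assms in auto)
  have 3: "P \<le> M" unfolding P_def M_def
    by (rule max.boundedI; rule mult_mono) (use assms in auto)
  have 4: "m \<le> p" unfolding p_def m_def
    by (rule min.boundedI; rule mult_mono) (use assms in auto)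
  have 5: "P + p = a2*a3 + b2*b3" unfolding P_def p_def by (simp add: max_def min_def)
  have 6: "min a1 b1 * (M - P) \<le> max a1 b1 * (M - P)" using 3 by (intro mult_right_mono) auto
  have 7: "0 \<le> min a1 b1 * ((M + m) - (P + p))" using 2 5 assms by auto
  have "max a1 b1 * P + min a1 b1 * p \<le> max a1 b1 * M + min a1 b1 * m"
    using 6 7 by (simp add: algebra_simps)
  with 1 show ?thesis unfolding M_def m_def by (simp add: mult.assoc)
qed

lemma gmm: "(1 - max a b) * (1 - min a b) = (1 - a) * (1 - (b::real))"
  by (simp add: max_def min_def mult.commute)
lemma pmm: "max a b * min a b = a * (b::real)"
  by (simp add: max_def min_def mult.commute)

lemma tp2: fixes a1 a2 a3 b1 b2 b3 k :: real
  assumes "0 \<le> a1" "0 \<le> a2" "0 \<le> a3" "0 \<le> b1" "0 \<le> b2" "0 \<le> b3"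
   "a1 \<le> 1" "a2 \<le> 1" "a3 \<le> 1" "b1 \<le> 1" "b2 \<le> 1" "b3 \<le> 1" "0 \<le> k"
  shows "Fk k a1 a2 a3 * Fk k b1 b2 b3 \<le>
     Fk k (max a1 b1) (max a2 b2) (max a3 b3) * Fk k (min a1 b1) (min a2 b2) (min a3 b3)"
proof -
  define Gp where "Gp = ((1-a1)*(1-b1))*((1-a2)*(1-b2))*((1-a3)*(1-b3))"
  define A where "A = a1*a2*a3"
  define B where "B = b1*b2*b3"
  define MM where "MM = max a1 b1 * max a2 b2 * max a3 b3"
  define mm where "mm = min a1 b1 * min a2 b2 * min a3 b3"
  have L: "Fk k a1 a2 a3 * Fk k b1 b2 b3 = Gp * ((1 + k*A) * (1 + k*B))"
    unfolding Fk_def Gp_def A_def B_def by (simp add: mult_ac)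
  have R: "Fk k (max a1 b1) (max a2 b2) (max a3 b3) * Fk k (min a1 b1) (min a2 b2) (min a3 b3)
      = ((1 - max a1 b1) * (1 - min a1 b1)) * ((1 - max a2 b2) * (1 - min a2 b2)) * ((1 - max a3 b3) * (1 - min a3 b3))
        * ((1 + k*MM) * (1 + k*mm))"
    unfolding Fk_def MM_def mm_def by (simp add: mult_ac)
  have R2: "\<dots> = Gp * ((1 + k*MM) * (1 + k*mm))" unfolding gmm Gp_def ..
  have Gp0: "0 \<le> Gp" unfolding Gp_def using assms by simp
  have s: "A + B \<le> MM + mm" unfolding A_def B_def MM_def mm_def by (rule sm3) (use assms in auto)
  have pr: "MM * mm = A * B" unfolding MM_def mm_def A_def B_def
  proof -
    have "max a1 b1 * max a2 b2 * max a3 b3 * (min a1 b1 * min a2 b2 * min a3 b3)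
       = (max a1 b1 * min a1 b1) * (max a2 b2 * min a2 b2) * (max a3 b3 * min a3 b3)" by (simp add: mult_ac)
    also have "\<dots> = a1 * a2 * a3 * (b1 * b2 * b3)" unfolding pmm by (simp add: mult_ac)
    finally show "max a1 b1 * max a2 b2 * max a3 b3 * (min a1 b1 * min a2 b2 * min a3 b3) = a1 * a2 * a3 * (b1 * b2 * b3)" .
  qed
  have "(1 + k*A) * (1 + k*B) = 1 + k*(A+B) + k*k*(A*B)" by (simp add: algebra_simps)
  also have "\<dots> \<le> 1 + k*(MM+mm) + k*k*(MM*mm)" using s pr assms by (simp add: mult_left_mono)
  also have "\<dots> = (1 + k*MM) * (1 + k*mm)" by (simp add: algebra_simps)
  finally have "(1 + k*A) * (1 + k*B) \<le> (1 + k*MM) * (1 + k*mm)" .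
  then show ?thesis unfolding L R R2 using Gp0 by (rule mult_left_mono)
qed

definition lo :: "real \<Rightarrow> real \<Rightarrow> real" where "lo s t = (if s = 1 then t else min (-t) 0)"
definition hi :: "real \<Rightarrow> real \<Rightarrow> real" where "hi s t = (if s = 1 then max t 1 else -t)"
definition wv :: "real \<Rightarrow> real \<Rightarrow> real" where "wv s t = (if s = 1 then cl t else 1 - cl (-t))"

lemma lo_hi: "lo s t \<le> hi s t" by (auto simp: lo_def hi_def)

lemma coord: assumes "s = 1 \<or> s = -1"
  shows "cl (hi s t) - cl (lo s t) = 1 - wv s t"
    "ph (cl (hi s t)) - ph (cl (lo s t)) = - s * (1 - wv s t) * wv s t"
proof -
  have a: "cl (max t 1) = 1" "cl (min (-t) 0) = 0" by (auto simp: cl_def)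
  show "cl (hi s t) - cl (lo s t) = 1 - wv s t"
    using assms by (auto simp: hi_def lo_def wv_def a)
  show "ph (cl (hi s t)) - ph (cl (lo s t)) = - s * (1 - wv s t) * wv s t"
    using assms by (auto simp: hi_def lo_def wv_def a ph_def algebra_simps)
qed

lemma wv_mono: "a \<le> b \<Longrightarrow> wv s a \<le> wv s b"
  by (auto simp: wv_def cl_def max_def min_def)
lemma wv01: "0 \<le> wv s t" "wv s t \<le> 1"
  by (auto simp: wv_def cl_def max_def min_def)
lemma wv_max: "wv s (max a b) = max (wv s a) (wv s b)"
  using wv_mono[of a b s] wv_mono[of b a s] by (auto simp: max_def)
lemma wv_min: "wv s (min a b) = min (wv s a) (wv s b)"
  using wv_mono[of a b s] wv_mono[of b a s] by (auto simp: min_def)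

locale cop = prob_space M for M :: "'a measure" +
  fixes X :: "'a \<Rightarrow> real^3" and lam :: real
  assumes Xm: "X \<in> borel_measurable M"
    and df: "has_copula_df M X (C_lam lam)"
begin

lemma Ym[measurable]: "(\<lambda>\<omega>. X \<omega> $ i) \<in> borel_measurable M"
  by (rule measurable_compose[OF Xm borel_measurable_continuous_onI[OF continuous_on_component[OF continuous_on_id]]])

definition SS where "SS l1 h1 l2 h2 l3 h3 =
  {\<omega>\<in>space M. cnd l1 h1 (X \<omega> $ 1) \<and> cnd l2 h2 (X \<omega> $ 2) \<and> cnd l3 h3 (X \<omega> $ 3)}"
definition Q where "Q l1 h1 l2 h2 l3 h3 = measure M (SS l1 h1 l2 h2 l3 h3)"

lemma SS_sets: "SS l1 h1 l2 h2 l3 h3 \<in> sets M"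
  unfolding SS_def cnd_def by (cases l1; cases l2; cases l3) simp_all

lemma cdf: "Q None b1 None b2 None b3 = C_lam lam (vector [cl b1, cl b2, cl b3])"
proof -
  have eq: "SS None b1 None b2 None b3 = {\<omega> \<in> space M. \<forall>i. X \<omega> $ i \<le> vector [b1,b2,b3] $ i}"
    unfolding SS_def cnd_def by (simp add: forall_3)
  moreover have "(\<chi> i. max 0 (min 1 ((vector [b1,b2,b3]::real^3) $ i))) = vector [cl b1, cl b2, cl b3]"
    by (simp add: vec_eq_iff forall_3 cl_def)
  moreover have "measure M {\<omega> \<in> space M. \<forall>i. X \<omega> $ i \<le> (vector [b1,b2,b3]::real^3) $ i}
     = C_lam lam (\<chi> i. max 0 (min 1 ((vector [b1,b2,b3]::real^3) $ i)))"
    using df unfolding has_copula_df_def by blast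
  ultimately show ?thesis unfolding Q_def by simp
qed

lemma step1: "a \<le> h1 \<Longrightarrow> Q (Some a) h1 l2 h2 l3 h3 = Q None h1 l2 h2 l3 h3 - Q None a l2 h2 l3 h3"
proof -
  assume a: "a \<le> h1"
  have eq: "SS (Some a) h1 l2 h2 l3 h3 = SS None h1 l2 h2 l3 h3 - SS None a l2 h2 l3 h3"
    unfolding SS_def cnd_def by auto
  have sub: "SS None a l2 h2 l3 h3 \<subseteq> SS None h1 l2 h2 l3 h3"
    using a unfolding SS_def cnd_def by auto
  show ?thesis unfolding Q_def eq by (rule finite_measure_Diff[OF SS_sets SS_sets sub])
qed

lemma step2: "a \<le> h2 \<Longrightarrow> Q l1 h1 (Some a) h2 l3 h3 = Q l1 h1 None h2 l3 h3 - Q l1 h1 None a l3 h3"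
proof -
  assume a: "a \<le> h2"
  have eq: "SS l1 h1 (Some a) h2 l3 h3 = SS l1 h1 None h2 l3 h3 - SS l1 h1 None a l3 h3"
    unfolding SS_def cnd_def by auto
  have sub: "SS l1 h1 None a l3 h3 \<subseteq> SS l1 h1 None h2 l3 h3"
    using a unfolding SS_def cnd_def by auto
  show ?thesis unfolding Q_def eq by (rule finite_measure_Diff[OF SS_sets SS_sets sub])
qed

lemma step3: "a \<le> h3 \<Longrightarrow> Q l1 h1 l2 h2 (Some a) h3 = Q l1 h1 l2 h2 None h3 - Q l1 h1 l2 h2 None a"
proof -
  assume a: "a \<le> h3"
  have eq: "SS l1 h1 l2 h2 (Some a) h3 = SS l1 h1 l2 h2 None h3 - SS l1 h1 l2 h2 None a"
    unfolding SS_def cnd_def by auto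
  have sub: "SS l1 h1 l2 h2 None a \<subseteq> SS l1 h1 l2 h2 None h3"
    using a unfolding SS_def cnd_def by auto
  show ?thesis unfolding Q_def eq by (rule finite_measure_Diff[OF SS_sets SS_sets sub])
qed

lemma Cv: "C_lam lam (vector [u1,u2,u3]) = u1*u2*u3 + lam * ph u1 * ph u2 * ph u3"
  by (simp add: C_lam_def ph_def algebra_simps)

lemma box_alg: fixes l :: real shows
 "(B1*B2*B3 + l*P1*P2*P3) - (B1*B2*A3 + l*P1*P2*R3) - (B1*A2*B3 + l*P1*R2*P3) + (B1*A2*A3 + l*P1*R2*R3) - (A1*B2*B3 + l*R1*P2*P3) + (A1*B2*A3 + l*R1*P2*R3) + (A1*A2*B3 + l*R1*R2*P3) - (A1*A2*A3+ l*R1*R2*R3) = (B1-A1)*(B2-A2)*(B3-A3) + l*(P1-R1)*(P2-R2)*(P3-R3)"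
  by (simp add: algebra_simps)

lemma box: assumes "a1 \<le> b1" "a2 \<le> b2" "a3 \<le> b3"
  shows "Q (Some a1) b1 (Some a2) b2 (Some a3) b3 =
    (cl b1 - cl a1) * (cl b2 - cl a2) * (cl b3 - cl a3)
    + lam * (ph (cl b1) - ph (cl a1)) * (ph (cl b2) - ph (cl a2)) * (ph (cl b3) - ph (cl a3))"
proof -
  have e: "Q (Some a1) b1 (Some a2) b2 (Some a3) b3 = Q None b1 None b2 None b3 - Q None b1 None b2 None a3
     - Q None b1 None a2 None b3 + Q None b1 None a2 None a3 - Q None a1 None b2 None b3
     + Q None a1 None b2 None a3 + Q None a1 None a2 None b3 - Q None a1 None a2 None a3"
    using assms by (simp add: step1 step2 step3)
  show ?thesis unfolding e cdf Cv by (rule box_alg)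
qed


lemma cl01: "cl 0 = 0" "cl 1 = 1" "ph 0 = 0" "ph 1 = 0"
  by (simp_all add: cl_def ph_def)

definition G where "G = SS (Some 0) 1 (Some 0) 1 (Some 0) 1"

lemma AE_G: "AE \<omega> in M. \<omega> \<in> G"
proof (rule AE_prob_1)
  show "prob G = 1" unfolding G_def using box[of 0 1 0 1 0 1] Q_def by (simp add: cl01)
qed

lemma cl_lip: "e > 0 \<Longrightarrow> cl c - cl (c - e) \<le> e"
  by (auto simp: cl_def max_def min_def)

lemma cl_mono: "a \<le> b \<Longrightarrow> cl a \<le> cl b"
  by (auto simp: cl_def max_def min_def)

lemma eps_zero: fixes m :: real assumes "0 \<le> m" "\<And>e. e > 0 \<Longrightarrow> m \<le> e" shows "m = 0"
  using assms(2)[of "m/2"] assms(1) by (cases "m = 0") auto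

lemma pt1: "measure M {\<omega>\<in>space M. X \<omega> $ 1 = c} = 0"
proof (rule eps_zero)
  fix e :: real assume e: "e > 0"
  have "measure M {\<omega>\<in>space M. X \<omega> $ 1 = c} \<le> measure M (SS (Some (c-e)) c (Some 0) 1 (Some 0) 1)"
    by (rule finite_measure_mono_AE[OF _ SS_sets]) (use AE_G e in \<open>auto simp: G_def SS_def cnd_def\<close>)
  also have "\<dots> = cl c - cl (c - e)" using box[of "c-e" c 0 1 0 1] e unfolding Q_def by (simp add: cl01)
  also have "\<dots> \<le> e" using cl_lip e .
  finally show "measure M {\<omega>\<in>space M. X \<omega> $ 1 = c} \<le> e" .
qed simp

lemma pt2: "measure M {\<omega>\<in>space M. X \<omega> $ 2 = c} = 0"
proof (rule eps_zero)
  fix e :: real assume e: "e > 0"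
  have "measure M {\<omega>\<in>space M. X \<omega> $ 2 = c} \<le> measure M (SS (Some 0) 1 (Some (c-e)) c (Some 0) 1)"
    by (rule finite_measure_mono_AE[OF _ SS_sets]) (use AE_G e in \<open>auto simp: G_def SS_def cnd_def\<close>)
  also have "\<dots> = cl c - cl (c - e)" using box[of 0 1 "c-e" c 0 1] e unfolding Q_def by (simp add: cl01)
  also have "\<dots> \<le> e" using cl_lip e .
  finally show "measure M {\<omega>\<in>space M. X \<omega> $ 2 = c} \<le> e" .
qed simp

lemma pt3: "measure M {\<omega>\<in>space M. X \<omega> $ 3 = c} = 0"
proof (rule eps_zero)
  fix e :: real assume e: "e > 0"
  have "measure M {\<omega>\<in>space M. X \<omega> $ 3 = c} \<le> measure M (SS (Some 0) 1 (Some 0) 1 (Some (c-e)) c)"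
    by (rule finite_measure_mono_AE[OF _ SS_sets]) (use AE_G e in \<open>auto simp: G_def SS_def cnd_def\<close>)
  also have "\<dots> = cl c - cl (c - e)" using box[of 0 1 0 1 "c-e" c] e unfolding Q_def by (simp add: cl01)
  also have "\<dots> \<le> e" using cl_lip e .
  finally show "measure M {\<omega>\<in>space M. X \<omega> $ 3 = c} \<le> e" .
qed simp

lemma AE_ne: "AE \<omega> in M. X \<omega> $ i \<noteq> c"
proof -
  have s: "{\<omega>\<in>space M. X \<omega> $ i = c} \<in> sets M" by measurable
  have "measure M {\<omega>\<in>space M. X \<omega> $ i = c} = 0"
    using exhaust_3[of i] pt1 pt2 pt3 by auto
  then have "emeasure M {\<omega>\<in>space M. X \<omega> $ i = c} = 0"
    using s by (simp add: emeasure_eq_measure)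
  then show ?thesis
    by (subst AE_iff_measurable[OF s]) auto
qed


lemma sgt_sets: "sgt_event M X \<alpha> y \<in> sets M"
  unfolding sgt_event_def forall_3 by measurable

lemma sgt_Q: assumes a1: "\<alpha>$1 = 1 \<or> \<alpha>$1 = -1" and a2: "\<alpha>$2 = 1 \<or> \<alpha>$2 = -1" and a3: "\<alpha>$3 = 1 \<or> \<alpha>$3 = -1"
  shows "measure M (sgt_event M X \<alpha> y) = Q (Some (lo (\<alpha>$1) (y$1))) (hi (\<alpha>$1) (y$1))
     (Some (lo (\<alpha>$2) (y$2))) (hi (\<alpha>$2) (y$2)) (Some (lo (\<alpha>$3) (y$3))) (hi (\<alpha>$3) (y$3))"
  unfolding Q_def
proof (rule finite_measure_eq_AE[OF _ sgt_sets SS_sets])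
  have "AE \<omega> in M. \<omega> \<in> G \<and> X \<omega> $ 1 \<noteq> - (y$1) \<and> X \<omega> $ 2 \<noteq> - (y$2) \<and> X \<omega> $ 3 \<noteq> - (y$3)"
    using AE_G AE_ne[of 1 "-(y$1)"] AE_ne[of 2 "-(y$2)"] AE_ne[of 3 "-(y$3)"] by eventually_elim auto
  then show "AE \<omega> in M. (\<omega> \<in> sgt_event M X \<alpha> y) = (\<omega> \<in> SS (Some (lo (\<alpha>$1) (y$1))) (hi (\<alpha>$1) (y$1))
     (Some (lo (\<alpha>$2) (y$2))) (hi (\<alpha>$2) (y$2)) (Some (lo (\<alpha>$3) (y$3))) (hi (\<alpha>$3) (y$3)))"
  proof eventually_elim
    case (elim \<omega>)
    have c: "\<And>s t x. s = 1 \<or> s = -1 \<Longrightarrow> 0 < x \<Longrightarrow> x \<le> 1 \<Longrightarrow> x \<noteq> -t \<Longrightarrow>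
       (s * x > t) = (lo s t < x \<and> x \<le> hi s t)"
      by (auto simp: lo_def hi_def)
    show ?case using elim c[OF a1] c[OF a2] c[OF a3]
      by (auto simp: sgt_event_def SS_def G_def cnd_def forall_3)
  qed
qed

lemma sgt_F: assumes a1: "\<alpha>$1 = 1 \<or> \<alpha>$1 = -1" and a2: "\<alpha>$2 = 1 \<or> \<alpha>$2 = -1" and a3: "\<alpha>$3 = 1 \<or> \<alpha>$3 = -1"
  shows "measure M (sgt_event M X \<alpha> y) = Fk (- lam * (\<alpha>$1) * (\<alpha>$2) * (\<alpha>$3))
     (wv (\<alpha>$1) (y$1)) (wv (\<alpha>$2) (y$2)) (wv (\<alpha>$3) (y$3))"
  unfolding sgt_Q[OF assms] box[OF lo_hi lo_hi lo_hi] coord[OF a1] coord[OF a2] coord[OF a3] Fk_def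
  by (simp add: algebra_simps)


lemma Idep: assumes a1: "\<alpha>$1 = 1 \<or> \<alpha>$1 = -1" and a2: "\<alpha>$2 = 1 \<or> \<alpha>$2 = -1" and a3: "\<alpha>$3 = 1 \<or> \<alpha>$3 = -1"
  and k0: "0 \<le> - lam * (\<alpha>$1) * (\<alpha>$2) * (\<alpha>$3)"
  shows "I_dep M X \<alpha>"
proof -
  define k where "k = - lam * (\<alpha>$1) * (\<alpha>$2) * (\<alpha>$3)"
  define P where "P y = measure M (sgt_event M X \<alpha> y)" for y
  have PF: "P y = Fk k (wv (\<alpha>$1) (y$1)) (wv (\<alpha>$2) (y$2)) (wv (\<alpha>$3) (y$3))" for y
    unfolding P_def k_def by (rule sgt_F[OF a1 a2 a3])
  have TP: "P y * P z \<le> P (\<chi> i. max (y$i) (z$i)) * P (\<chi> i. min (y$i) (z$i))" for y z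
    unfolding PF vec_lambda_beta wv_max wv_min
    by (rule tp2) (use k0 in \<open>simp_all add: wv01 k_def\<close>)
  show ?thesis unfolding I_dep_def
  proof (intro allI impI, elim conjE)
    fix x x' x'' :: "real^3"
    assume le: "\<forall>i. x'$i \<le> x''$i" and pos: "measure M (sgt_event M X \<alpha> x'') > 0"
    define u where "u = (\<chi> i. max (x$i) (x'$i))"
    define v where "v = (\<chi> i. max (x$i) (x''$i))"
    define m where "m = (\<chi> i. min (u$i) (x''$i))"
    have i1: "sgt_event M X \<alpha> x \<inter> sgt_event M X \<alpha> x' = sgt_event M X \<alpha> u"
      unfolding u_def sgt_event_def by auto
    have i2: "sgt_event M X \<alpha> x \<inter> sgt_event M X \<alpha> x'' = sgt_event M X \<alpha> v"
      unfolding v_def sgt_event_def by auto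
    have uv: "(\<chi> i. max (u$i) (x''$i)) = v" unfolding u_def v_def vec_eq_iff
    proof
      fix i show "(\<chi> i. max ((\<chi> i. max (x $ i) (x' $ i)) $ i) (x'' $ i)) $ i = (\<chi> i. max (x $ i) (x'' $ i)) $ i"
        using le[rule_format, of i] by (auto simp: max_def)
    qed
    have mge: "x'$i \<le> m$i" for i using le[rule_format, of i] by (simp add: m_def u_def)
    have sub1: "sgt_event M X \<alpha> m \<subseteq> sgt_event M X \<alpha> x'"
      by (auto simp: sgt_event_def intro: le_less_trans[OF mge])
    have sub2: "sgt_event M X \<alpha> x'' \<subseteq> sgt_event M X \<alpha> x'"
      by (auto simp: sgt_event_def intro: le_less_trans[OF le[rule_format]])
    have Pm: "P m \<le> P x'" unfolding P_def by (rule finite_measure_mono[OF sub1 sgt_sets])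
    have Px: "P x'' \<le> P x'" unfolding P_def by (rule finite_measure_mono[OF sub2 sgt_sets])
    have T: "P u * P x'' \<le> P v * P m" using TP[of u x''] unfolding uv m_def .
    have Pv: "0 \<le> P v" unfolding P_def by simp
    have T2: "P u * P x'' \<le> P v * P x'" using T mult_left_mono[OF Pm Pv] by linarith
    have p2: "0 < P x''" using pos unfolding P_def .
    have p1: "0 < P x'" using p2 Px by linarith
    show "cond_prob M (sgt_event M X \<alpha> x) (sgt_event M X \<alpha> x')
          \<le> cond_prob M (sgt_event M X \<alpha> x) (sgt_event M X \<alpha> x'')"
      unfolding cond_prob_def i1 i2 P_def[symmetric] using T2 p1 p2
      by (simp add: field_simps)
  qed
qed

end

theorem mainTheorem7:
  fixes M :: "'a measure" and X :: "'a \<Rightarrow> real^3" and l :: real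
  assumes "prob_space M"
    and "X \<in> borel_measurable M"
    and "has_copula_df M X (C_lam l)"
  shows "(l \<in> {-1..0} \<longrightarrow>
            I_dep M X (vector [1, 1, 1]) \<and> I_dep M X (vector [1, -1, -1]) \<and>
            I_dep M X (vector [-1, 1, -1]) \<and> I_dep M X (vector [-1, -1, 1]))
       \<and> (l \<in> {0..1} \<longrightarrow>
            I_dep M X (vector [-1, 1, 1]) \<and> I_dep M X (vector [1, -1, 1]) \<and>
            I_dep M X (vector [1, 1, -1]) \<and> I_dep M X (vector [-1, -1, -1]))"
proof -
  interpret c: cop M X l using assms by (simp add: cop_def cop_axioms_def)
  show ?thesis by (auto intro!: c.Idep)
qed

end
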